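(* (1) Let $(w_n)_{n\ge1}$ be a bounded sequence of positive reals with $\lim_{n\to\infty}w_1w_2\cdots w_n=\infty$. Then the unilateral backward shift $B_w$ on $\ell^\infty$, $(B_wy)_n=w_{n+1}y_{n+1}$, is frequently hypercyclic with respect to the weak$^*$-topology $\sigma(\ell^\infty,\ell^1)$. (2) Let $(w_n)_{n\in\mathbb{Z}}$ be a bounded sequence of positive reals with $\lim_{n\to\infty}w_1w_2\cdots w_n=\infty$ and $\lim_{n\to\infty}w_{-1}w_{-2}\cdots w_{-n}=0$. Then the bilateral backward shift $T_w$ on $\ell^\infty(\mathbb{Z})$, $(T_wy)_n=w_{n+1}y_{n+1}$ ($n\in\mathbb{Z}$), is frequently hypercyclic with respect to the weak$^*$-topology $\sigma(\ell^\infty(\mathbb{Z}),\ell^1(\mathbb{Z}))$.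
   Context: An operator $T$ on a topological vector space $(Y,\tau)$ is frequently hypercyclic with respect to $\tau$ if there is $y\in Y$ such that for every nonempty $\tau$-open $U$ the set $A=\{n\in\mathbb{N}:T^ny\in U\}$ has positive lower density $\liminf_{N\to\infty}\mathrm{card}\{n\in A:n\le N\}/N>0$. *)

theory Defs
  imports "HOL-Analysis.Analysis" "HOL-Library.Liminf_Limsup"
begin

definition linf :: "('i \<Rightarrow> real) set" where
  "linf = {y. bounded (range y)}"

definition ell1 :: "('i \<Rightarrow> real) set" where
  "ell1 = {a. (\<lambda>i. \<bar>a i\<bar>) summable_on UNIV}"

definition weak_star :: "('i \<Rightarrow> real) topology" where
  "weak_star = subtopology
     (topology_generated_by {{y. (\<Sum>\<^sub>\<infinity>i. a i * y i) \<in> V} | a V. a \<in> ell1 \<and> open V}) linf"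

definition lower_density :: "nat set \<Rightarrow> ereal" where
  "lower_density A = liminf (\<lambda>N. ereal (real (card {n \<in> A. 1 \<le> n \<and> n \<le> N}) / real N))"

definition freq_hypercyclic :: "'a topology \<Rightarrow> ('a \<Rightarrow> 'a) \<Rightarrow> bool" where
  "freq_hypercyclic X T \<longleftrightarrow>
     (\<exists>y \<in> topspace X. \<forall>U. openin X U \<and> U \<noteq> {} \<longrightarrow> lower_density {n. (T ^^ n) y \<in> U} > 0)"

definition wshift :: "('i::{plus,one} \<Rightarrow> real) \<Rightarrow> ('i \<Rightarrow> real) \<Rightarrow> ('i \<Rightarrow> real)" where
  "wshift w y = (\<lambda>n. w (n + 1) * y (n + 1))"

end

theory Submission
  imports Defs
begin



definition sP :: "nat \<Rightarrow> nat \<Rightarrow> nat" where "sP k t = 2^(k+t+2) - 2^(t+1)"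
definition eP :: "nat \<Rightarrow> nat \<Rightarrow> nat" where "eP k t = 2^(k+t+2) - 2^t"

lemma pow2_mono: "a \<le> b \<Longrightarrow> (2::nat)^a \<le> 2^b"
  by (rule power_increasing) simp_all

lemma sP_low: "2^(k+t+1) \<le> sP k t"
proof -
  have "(2::nat)^(t+1) \<le> 2^(k+t+1)" by (rule pow2_mono) simp
  moreover have "(2::nat)^(k+t+2) = 2^(k+t+1) + 2^(k+t+1)" by simp
  ultimately show ?thesis unfolding sP_def by linarith
qed

lemma eP_eq: "eP k t = sP k t + 2^t"
proof -
  have "(2::nat)^(t+1) \<le> 2^(k+t+2)" by (rule pow2_mono) simp
  moreover have "(2::nat)^(t+1) = 2^t + 2^t" by simp
  ultimately show ?thesis unfolding sP_def eP_def by linarith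
qed

lemma eP_up: "eP k t \<le> 2^(k+t+2)" unfolding eP_def by simp

lemma disj_aux:
  assumes "(k,t) \<noteq> (l,t')" "k + t \<le> l + t'" "k + t = l + t' \<longrightarrow> t' < t"
  shows "eP k t \<le> sP l t'"
proof (cases "k + t < l + t'")
  case True
  have "(2::nat)^(k+t+2) \<le> 2^(l+t'+1)" using True by (intro pow2_mono) simp
  then show ?thesis using eP_up[of k t] sP_low[of l t'] by linarith
next
  case False
  then have eq: "k + t = l + t'" using assms by simp
  then have lt: "t' < t" using assms by simp
  have "(2::nat)^(t'+1) \<le> 2^t" using lt by (intro pow2_mono) simp
  moreover have "k+t+2 = l+t'+2" using eq by simp
  ultimately show ?thesis unfolding eP_def sP_def by (metis diff_le_mono2)
qed

lemma disj:
  assumes "(k,t) \<noteq> (l,t')"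
  shows "eP k t \<le> sP l t' \<or> eP l t' \<le> sP k t"
proof -
  consider "k + t < l + t'" | "l + t' < k + t" | "k + t = l + t'" "t' < t" | "k + t = l + t'" "t < t'"
    using assms by fastforce
  then show ?thesis
  proof cases
    case 1 then show ?thesis using disj_aux[OF assms] by simp
  next
    case 2 then show ?thesis using disj_aux[of l t' k t] assms by auto
  next
    case 3 then show ?thesis using disj_aux[OF assms] by simp
  next
    case 4 then show ?thesis using disj_aux[of l t' k t] assms by auto
  qed
qed

definition Aset :: "(nat \<Rightarrow> nat) \<Rightarrow> nat \<Rightarrow> nat set" where
  "Aset N k = {sP k t + 2^(N k + 1) * (i+1) | t i. N k + 1 \<le> t \<and> i + 1 < 2^(t - (N k + 1))}"

lemma Aset_bounds:
  fixes s :: nat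
  assumes "s \<le> t" "i + 1 < 2^(t - s)"
  shows "sP k t + 2^s \<le> sP k t + 2^s * (i+1)"
    and "sP k t + 2^s * (i+1) + 2^s \<le> eP k t"
proof -
  show "sP k t + 2^s \<le> sP k t + 2^s * (i+1)" by simp
  have "i + 2 \<le> 2^(t - s)" using assms(2) by simp
  then have "2^s * (i+2) \<le> 2^s * 2^(t - s)" by (rule mult_le_mono2)
  also have "\<dots> = (2::nat)^t" using assms(1) by (simp flip: power_add)
  finally have h: "2^s * (i+2) \<le> (2::nat)^t" .
  have "2^s*(i+1) + 2^s = (2::nat)^s*(i+2)" by (simp add: algebra_simps)
  then show "sP k t + 2^s * (i+1) + 2^s \<le> eP k t"
    unfolding eP_eq using h by linarith
qed

lemma two_pow_ge: "2 * n \<le> (2::nat)^(n+1)"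
  using less_exp[of n] by simp

lemma Aset_sep:
  assumes "n \<in> Aset N k" "m \<in> Aset N l" "(k,n) \<noteq> (l,m)"
  shows "n + N k + N l \<le> m \<or> m + N k + N l \<le> n"
proof -
  obtain t i where n: "n = sP k t + 2^(N k + 1) * (i+1)" "N k + 1 \<le> t" "i + 1 < 2^(t - (N k + 1))"
    using assms(1) unfolding Aset_def by blast
  obtain t' i' where m: "m = sP l t' + 2^(N l + 1) * (i'+1)" "N l + 1 \<le> t'" "i' + 1 < 2^(t' - (N l + 1))"
    using assms(2) unfolding Aset_def by blast
  note bn = Aset_bounds[OF n(2,3), of k] and bm = Aset_bounds[OF m(2,3), of l]
  have gk: "2 * N k \<le> 2^(N k + 1)" and gl: "2 * N l \<le> 2^(N l + 1)" by (rule two_pow_ge)+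
  show ?thesis
  proof (cases "(k,t) = (l,t')")
    case True
    then have kl: "k = l" "t = t'" by auto
    then have "i \<noteq> i'" using assms(3) n m by auto
    then consider "i < i'" | "i' < i" by linarith
    then show ?thesis
    proof cases
      case 1
      then have "2^(N k + 1) * (i+1) + 2^(N k + 1) \<le> 2^(N k + 1) * (i'+1)"
        by (metis add.commute add_le_cancel_left less_iff_Suc_add mult_Suc_right
            plus_1_eq_Suc le_add1 mult_le_mono2)
      then have "n + 2^(N k + 1) \<le> m" using n m kl by simp
      moreover have "N l = N k" using kl by simp
      ultimately show ?thesis using gk by linarith
    next
      case 2
      then have "2^(N k + 1) * (i'+1) + 2^(N k + 1) \<le> 2^(N k + 1) * (i+1)"
        by (metis add.commute add_le_cancel_left less_iff_Suc_add mult_Suc_right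
            plus_1_eq_Suc le_add1 mult_le_mono2)
      then have "m + 2^(N k + 1) \<le> n" using n m kl by simp
      moreover have "N l = N k" using kl by simp
      ultimately show ?thesis using gk by linarith
    qed
  next
    case False
    from disj[OF this] show ?thesis
    proof
      assume "eP k t \<le> sP l t'"
      then show ?thesis using bn bm n(1) m(1) gk gl by linarith
    next
      assume "eP l t' \<le> sP k t"
      then show ?thesis using bn bm n(1) m(1) gk gl by linarith
    qed
  qed
qed

lemma Aset_ge: "n \<in> Aset N k \<Longrightarrow> N k \<le> n"
proof -
  assume "n \<in> Aset N k"
  then obtain t i where n: "n = sP k t + 2^(N k + 1) * (i+1)" "N k + 1 \<le> t" "i + 1 < 2^(t - (N k + 1))"
    unfolding Aset_def by blast
  have "N k \<le> 2^(N k + 1)" using two_pow_ge[of "N k"] by linarith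
  then show ?thesis using Aset_bounds(1)[OF n(2,3), of k] n(1) by linarith
qed

lemma Aset_count:
  fixes M :: nat
  assumes "2^(k + (N k + 1) + 3) \<le> M"
  shows "real M / 2^(k + (N k + 1) + 4) \<le> real (card {n \<in> Aset N k. 1 \<le> n \<and> n \<le> M})"
proof -
  define s where "s = N k + 1"
  have "(1::nat) \<le> 2^(k + (N k + 1) + 3)" by simp
  then have M1: "M \<ge> 1" using assms by linarith
  obtain r where r: "2^r \<le> M" "M < 2^(r+1)" using ex_power_ivl1[of 2 M] M1 by auto
  have "(2::nat)^(k + s + 3) < 2^(r+1)" using assms r unfolding s_def by linarith
  then have "k + s + 3 < r + 1" by (rule power_less_imp_less_exp[rotated]) simp
  then have rge: "k + s + 3 \<le> r" by simp
  define t where "t = r - k - 2"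
  have tge: "s + 1 \<le> t" using rge t_def by simp
  have rt: "r = k + t + 2" using rge t_def by simp
  define q where "q = 2^(t - s) - (1::nat)"
  define f where "f i = sP k t + 2^s * (i+1)" for i
  have inj: "inj_on f {..<q}" unfolding inj_on_def f_def by simp
  have sub: "f ` {..<q} \<subseteq> {n \<in> Aset N k. 1 \<le> n \<and> n \<le> M}"
  proof
    fix x assume "x \<in> f ` {..<q}"
    then obtain i where i: "i < q" "x = f i" by auto
    have i1: "i + 1 < 2^(t - s)" using i(1) q_def by simp
    have st: "s \<le> t" using tge by simp
    have "x \<in> Aset N k" unfolding Aset_def using i i1 st s_def f_def by blast
    moreover have "1 \<le> x"
    proof -
      have "(1::nat) \<le> 2^s" by simp
      moreover have "2^s \<le> x" unfolding i(2) f_def by simp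
      ultimately show ?thesis by linarith
    qed
    moreover have "x \<le> M"
      using Aset_bounds(2)[OF st i1, of k] eP_up[of k t] r(1) rt i(2) f_def by simp
    ultimately show "x \<in> {n \<in> Aset N k. 1 \<le> n \<and> n \<le> M}" by simp
  qed
  have fin: "finite {n \<in> Aset N k. 1 \<le> n \<and> n \<le> M}" by simp
  have "q \<le> card {n \<in> Aset N k. 1 \<le> n \<and> n \<le> M}"
    using card_mono[OF fin sub] card_image[OF inj] by simp
  moreover have "2^(t - s - 1) \<le> q"
  proof -
    have "t - s = Suc (t - s - 1)" using tge by simp
    then have "(2::nat)^(t-s) = 2 * 2^(t-s-1)" by (metis power_Suc)
    moreover have "(1::nat) \<le> 2^(t-s-1)" by simp
    ultimately show ?thesis unfolding q_def by linarith
  qed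
  moreover have "M < 2^(k + s + 4) * 2^(t - s - 1)"
  proof -
    have "k + s + 4 + (t - s - 1) = r + 1" using tge rt by simp
    then show ?thesis using r(2) by (metis power_add)
  qed
  ultimately have "M < 2^(k + s + 4) * card {n \<in> Aset N k. 1 \<le> n \<and> n \<le> M}"
  proof -
    assume a: "q \<le> card {n \<in> Aset N k. 1 \<le> n \<and> n \<le> M}" "2^(t - s - 1) \<le> q" "M < 2^(k + s + 4) * 2^(t - s - 1)"
    have "(2::nat)^(k + s + 4) * 2^(t - s - 1) \<le> 2^(k + s + 4) * card {n \<in> Aset N k. 1 \<le> n \<and> n \<le> M}"
      using a(1,2) by (intro mult_le_mono2) linarith
    then show ?thesis using a(3) by linarith
  qed
  then have "real M < real (2^(k + s + 4) * card {n \<in> Aset N k. 1 \<le> n \<and> n \<le> M})"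
    unfolding of_nat_less_iff .
  then have "real M < 2^(k + s + 4) * real (card {n \<in> Aset N k. 1 \<le> n \<and> n \<le> M})"
    by simp
  then show ?thesis unfolding s_def by (simp add: field_simps)
qed

lemma Aset_density: "lower_density (Aset N k) > 0"
proof -
  define c :: real where "c = 1 / 2^(k + (N k + 1) + 4)"
  have c0: "c > 0" unfolding c_def by simp
  have "eventually (\<lambda>M. ereal c \<le> ereal (real (card {n \<in> Aset N k. 1 \<le> n \<and> n \<le> M}) / real M)) sequentially"
    unfolding eventually_sequentially
  proof (intro exI allI impI)
    fix M :: nat assume M: "2^(k + (N k + 1) + 3) \<le> M"
    have "(1::nat) \<le> 2^(k + (N k + 1) + 3)" by simp
    then have "0 < M" using M by linarith
    then have Mpos: "real M > 0" by simp
    have "c * real M \<le> real (card {n \<in> Aset N k. 1 \<le> n \<and> n \<le> M})"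
      using Aset_count[of k N M, OF M] unfolding c_def by simp
    then show "ereal c \<le> ereal (real (card {n \<in> Aset N k. 1 \<le> n \<and> n \<le> M}) / real M)"
      using Mpos by (simp add: field_simps)
  qed
  then have "ereal c \<le> lower_density (Aset N k)"
    unfolding lower_density_def by (rule Liminf_bounded)
  moreover have "0 < ereal c" using c0 by simp
  ultimately show ?thesis by (rule order.strict_trans2[rotated])
qed

lemma sep_sets:
  fixes N :: "nat \<Rightarrow> nat"
  shows "\<exists>A. (\<forall>k. lower_density (A k) > 0) \<and> (\<forall>k. \<forall>n\<in>A k. N k \<le> n) \<and>
     (\<forall>k l n m. n \<in> A k \<longrightarrow> m \<in> A l \<longrightarrow> (k,n) \<noteq> (l,m) \<longrightarrow> n + N k + N l \<le> m \<or> m + N k + N l \<le> n)"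
  apply (rule exI[of _ "Aset N"])
  using Aset_density Aset_ge Aset_sep by metis




lemma linf_iff: "y \<in> linf \<longleftrightarrow> (\<exists>B. \<forall>i. \<bar>y i\<bar> \<le> B)"
  unfolding linf_def bounded_iff by auto

lemma ell1_abs: "a \<in> ell1 \<Longrightarrow> (\<lambda>i. \<bar>a i\<bar>) summable_on A"
  unfolding ell1_def by (rule summable_on_subset) auto

lemma ell1_prod:
  assumes a: "a \<in> ell1" and v: "v \<in> linf"
  shows "(\<lambda>i. a i * v i) summable_on A"
proof -
  obtain B where B: "\<And>i. \<bar>v i\<bar> \<le> B" using v linf_iff by blast
  have s: "(\<lambda>i. (\<bar>B\<bar>+1) * \<bar>a i\<bar>) summable_on A"
    by (rule summable_on_cmult_right[OF ell1_abs[OF a]])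
  have "(\<lambda>i. norm (a i * v i)) summable_on A"
  proof (rule summable_on_comparison_test[OF s])
    fix i
    have "\<bar>a i\<bar> * \<bar>v i\<bar> \<le> \<bar>a i\<bar> * (\<bar>B\<bar>+1)"
      using B[of i] by (intro mult_left_mono) auto
    then show "norm (a i * v i) \<le> (\<bar>B\<bar>+1) * \<bar>a i\<bar>"
      by (simp add: abs_mult algebra_simps)
    show "0 \<le> norm (a i * v i)" by simp
  qed
  then show ?thesis by (rule summable_on_iff_abs_summable_on_real[THEN iffD2])
qed

lemma pair_diff:
  assumes a: "a \<in> ell1" and v: "v \<in> linf" and x: "x \<in> linf"
  shows "(\<Sum>\<^sub>\<infinity>i. a i * v i) - (\<Sum>\<^sub>\<infinity>i. a i * x i) = (\<Sum>\<^sub>\<infinity>i. a i * (v i - x i))"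
proof -
  have s1: "(\<lambda>i. a i * v i) summable_on UNIV" using ell1_prod[OF a v] .
  have s2: "(\<lambda>i. - (a i * x i)) summable_on UNIV" by (subst summable_on_uminus) (rule ell1_prod[OF a x])
  have "(\<Sum>\<^sub>\<infinity>i. a i * (v i - x i)) = (\<Sum>\<^sub>\<infinity>i. a i * v i + - (a i * x i))"
    by (simp add: algebra_simps)
  also have "\<dots> = (\<Sum>\<^sub>\<infinity>i. a i * v i) + (\<Sum>\<^sub>\<infinity>i. - (a i * x i))"
    by (rule infsum_add[OF s1 s2])
  also have "(\<Sum>\<^sub>\<infinity>i. - (a i * x i)) = - (\<Sum>\<^sub>\<infinity>i. a i * x i)"
    by (rule infsum_uminus)
  finally show ?thesis by simp
qed

lemma pair_est:
  assumes a: "a \<in> ell1" and v: "v \<in> linf" and x: "x \<in> linf" and F: "finite F"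
    and eta: "\<eta> \<ge> 0" and M: "M \<ge> 0"
    and b: "\<And>i. \<bar>v i - x i\<bar> \<le> (if i \<in> F then \<eta> else M)"
  shows "\<bar>(\<Sum>\<^sub>\<infinity>i. a i * v i) - (\<Sum>\<^sub>\<infinity>i. a i * x i)\<bar>
     \<le> \<eta> * (\<Sum>\<^sub>\<infinity>i. \<bar>a i\<bar>) + M * infsum (\<lambda>i. \<bar>a i\<bar>) (- F)"
proof -
  define h where "h i = \<bar>a i\<bar> * (if i \<in> F then \<eta> else M)" for i
  have vx: "v - x \<in> linf"
  proof -
    obtain B1 where "\<And>i. \<bar>v i\<bar> \<le> B1" using v linf_iff by blast
    moreover obtain B2 where "\<And>i. \<bar>x i\<bar> \<le> B2" using x linf_iff by blast
    ultimately have "\<bar>(v - x) i\<bar> \<le> B1 + B2" for i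
    proof -
      assume b1: "\<And>i. \<bar>v i\<bar> \<le> B1" and b2: "\<And>i. \<bar>x i\<bar> \<le> B2"
      have "\<bar>v i - x i\<bar> \<le> \<bar>v i\<bar> + \<bar>x i\<bar>" by (rule abs_triangle_ineq4)
      then show ?thesis using b1[of i] b2[of i] by simp
    qed
    then show ?thesis using linf_iff by blast
  qed
  have sd: "(\<lambda>i. a i * (v i - x i)) summable_on UNIV" using ell1_prod[OF a vx] by simp
  have sh: "h summable_on A" for A
  proof -
    have "(\<lambda>i. \<bar>a i\<bar> * (if i \<in> F then \<eta> else M)) summable_on A"
    proof (rule summable_on_comparison_test)
      show "(\<lambda>i. (\<eta> + M) * \<bar>a i\<bar>) summable_on A" by (rule summable_on_cmult_right[OF ell1_abs[OF a]])
      fix i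
      have "(if i \<in> F then \<eta> else M) \<le> \<eta> + M" using eta M by auto
      then have "\<bar>a i\<bar> * (if i \<in> F then \<eta> else M) \<le> \<bar>a i\<bar> * (\<eta> + M)"
        by (rule mult_left_mono) simp
      then show "\<bar>a i\<bar> * (if i \<in> F then \<eta> else M) \<le> (\<eta> + M) * \<bar>a i\<bar>"
        by (simp add: mult.commute)
      show "0 \<le> \<bar>a i\<bar> * (if i \<in> F then \<eta> else M)" using eta M by auto
    qed
    then show ?thesis unfolding h_def .
  qed
  have "\<bar>(\<Sum>\<^sub>\<infinity>i. a i * v i) - (\<Sum>\<^sub>\<infinity>i. a i * x i)\<bar> = \<bar>\<Sum>\<^sub>\<infinity>i. a i * (v i - x i)\<bar>"
    using pair_diff[OF a v x] by simp
  also have "\<dots> \<le> (\<Sum>\<^sub>\<infinity>i. norm (a i * (v i - x i)))"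
  proof -
    have "norm (\<Sum>\<^sub>\<infinity>i. a i * (v i - x i)) \<le> (\<Sum>\<^sub>\<infinity>i. norm (a i * (v i - x i)))"
      by (rule norm_infsum_bound) (rule summable_on_iff_abs_summable_on_real[THEN iffD1, OF sd])
    then show ?thesis by simp
  qed
  also have "\<dots> \<le> infsum h UNIV"
  proof (rule infsum_mono)
    show "(\<lambda>i. norm (a i * (v i - x i))) summable_on UNIV" by (rule summable_on_iff_abs_summable_on_real[THEN iffD1, OF sd])
    show "h summable_on UNIV" by (rule sh)
    fix i show "norm (a i * (v i - x i)) \<le> h i"
      unfolding h_def using b[of i] by (simp add: abs_mult mult_left_mono)
  qed
  also have "infsum h UNIV = infsum h F + infsum h (- F)"
    using infsum_Un_disjoint[OF sh sh, of F "- F"] by (simp add: Un_commute)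
  also have "infsum h F = \<eta> * infsum (\<lambda>i. \<bar>a i\<bar>) F"
    by (subst infsum_cmult_right[symmetric]) (auto simp: h_def intro!: infsum_cong ell1_abs[OF a])
  also have "infsum h (- F) = M * infsum (\<lambda>i. \<bar>a i\<bar>) (- F)"
    by (subst infsum_cmult_right[symmetric]) (auto simp: h_def intro!: infsum_cong ell1_abs[OF a])
  also have "\<eta> * infsum (\<lambda>i. \<bar>a i\<bar>) F \<le> \<eta> * (\<Sum>\<^sub>\<infinity>i. \<bar>a i\<bar>)"
  proof (rule mult_left_mono[OF _ eta])
    show "infsum (\<lambda>i. \<bar>a i\<bar>) F \<le> (\<Sum>\<^sub>\<infinity>i. \<bar>a i\<bar>)"
      by (rule infsum_mono_neutral) (auto intro: ell1_abs[OF a])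
  qed
  finally show ?thesis by simp
qed

lemma tail_small:
  assumes a: "a \<in> ell1" and d: "\<delta> > 0"
  shows "\<exists>F. finite F \<and> infsum (\<lambda>i. \<bar>a i\<bar>) (- F) \<le> \<delta>"
proof -
  obtain F where F: "finite F" "dist (sum (\<lambda>i. \<bar>a i\<bar>) F) (\<Sum>\<^sub>\<infinity>i. \<bar>a i\<bar>) \<le> \<delta>"
    using infsum_finite_approximation[OF ell1_abs[OF a] d] by blast
  have "(\<Sum>\<^sub>\<infinity>i. \<bar>a i\<bar>) = infsum (\<lambda>i. \<bar>a i\<bar>) F + infsum (\<lambda>i. \<bar>a i\<bar>) (- F)"
    using infsum_Un_disjoint[OF ell1_abs[OF a] ell1_abs[OF a], of F "- F"] by (simp add: Un_commute)
  also have "infsum (\<lambda>i. \<bar>a i\<bar>) F = sum (\<lambda>i. \<bar>a i\<bar>) F" using F(1) by simp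
  finally show ?thesis using F by (auto simp: dist_real_def)
qed

lemma tail_mono:
  assumes a: "a \<in> ell1" and "F \<subseteq> G"
  shows "infsum (\<lambda>i. \<bar>a i\<bar>) (- G) \<le> infsum (\<lambda>i. \<bar>a i\<bar>) (- F)"
  by (rule infsum_mono_neutral) (use assms in \<open>auto intro: ell1_abs[OF a]\<close>)

lemma zero_ell1: "(\<lambda>i. 0) \<in> ell1" unfolding ell1_def by simp

lemma weak_star_topspace: "topspace weak_star = linf"
proof -
  have "UNIV \<in> {{y. (\<Sum>\<^sub>\<infinity>i. a i * y i) \<in> V} | a V. a \<in> ell1 \<and> open V}"
    using zero_ell1 by (intro CollectI exI[of _ "\<lambda>i. 0"] exI[of _ UNIV]) auto
  then show ?thesis unfolding weak_star_def by auto
qed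

lemma gen_nbhd:
  assumes "generate_topology_on {{y. (\<Sum>\<^sub>\<infinity>i. a i * y i) \<in> V} | a V. a \<in> ell1 \<and> open V} U"
  shows "\<forall>x\<in>U. \<exists>Fa \<epsilon>. finite Fa \<and> Fa \<subseteq> ell1 \<and> \<epsilon> > 0 \<and>
     {y. \<forall>a\<in>Fa. \<bar>(\<Sum>\<^sub>\<infinity>i. a i * y i) - (\<Sum>\<^sub>\<infinity>i. a i * x i)\<bar> < \<epsilon>} \<subseteq> U"
  using assms
proof induction
  case Empty then show ?case by simp
next
  case (Int U1 U2)
  show ?case
  proof
    fix x assume "x \<in> U1 \<inter> U2"
    then have x12: "x \<in> U1" "x \<in> U2" by auto
    obtain F1 e1 where 1: "finite F1" "F1 \<subseteq> ell1" "e1 > 0"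
        "{y. \<forall>a\<in>F1. \<bar>(\<Sum>\<^sub>\<infinity>i. a i * y i) - (\<Sum>\<^sub>\<infinity>i. a i * x i)\<bar> < e1} \<subseteq> U1"
      using bspec[OF Int.IH(1) x12(1)] by blast
    obtain F2 e2 where 2: "finite F2" "F2 \<subseteq> ell1" "e2 > 0"
        "{y. \<forall>a\<in>F2. \<bar>(\<Sum>\<^sub>\<infinity>i. a i * y i) - (\<Sum>\<^sub>\<infinity>i. a i * x i)\<bar> < e2} \<subseteq> U2"
      using bspec[OF Int.IH(2) x12(2)] by blast
    show "\<exists>Fa \<epsilon>. finite Fa \<and> Fa \<subseteq> ell1 \<and> \<epsilon> > 0 \<and>
     {y. \<forall>a\<in>Fa. \<bar>(\<Sum>\<^sub>\<infinity>i. a i * y i) - (\<Sum>\<^sub>\<infinity>i. a i * x i)\<bar> < \<epsilon>} \<subseteq> U1 \<inter> U2"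
      apply (rule exI[of _ "F1 \<union> F2"], rule exI[of _ "min e1 e2"])
      using 1 2 by fastforce
  qed
next
  case (UN K)
  show ?case
  proof
    fix x assume "x \<in> \<Union>K"
    then obtain k where k: "k \<in> K" "x \<in> k" by auto
    obtain Fa \<epsilon> where F: "finite Fa" "Fa \<subseteq> ell1" "\<epsilon> > 0"
     "{y. \<forall>a\<in>Fa. \<bar>(\<Sum>\<^sub>\<infinity>i. a i * y i) - (\<Sum>\<^sub>\<infinity>i. a i * x i)\<bar> < \<epsilon>} \<subseteq> k"
      using bspec[OF UN.IH[OF k(1)] k(2)] by blast
    have "{y. \<forall>a\<in>Fa. \<bar>(\<Sum>\<^sub>\<infinity>i. a i * y i) - (\<Sum>\<^sub>\<infinity>i. a i * x i)\<bar> < \<epsilon>} \<subseteq> \<Union>K"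
      using F(4) k(1) by blast
    then show "\<exists>Fa \<epsilon>. finite Fa \<and> Fa \<subseteq> ell1 \<and> \<epsilon> > 0 \<and>
     {y. \<forall>a\<in>Fa. \<bar>(\<Sum>\<^sub>\<infinity>i. a i * y i) - (\<Sum>\<^sub>\<infinity>i. a i * x i)\<bar> < \<epsilon>} \<subseteq> \<Union>K"
      using F(1-3) by blast
  qed
next
  case (Basis s)
  then obtain a V where s: "s = {y. (\<Sum>\<^sub>\<infinity>i. a i * y i) \<in> V}" "a \<in> ell1" "open V" by blast
  show ?case
  proof
    fix x assume "x \<in> s"
    then have "(\<Sum>\<^sub>\<infinity>i. a i * x i) \<in> V" using s by simp
    then obtain e where e: "e > 0" "ball (\<Sum>\<^sub>\<infinity>i. a i * x i) e \<subseteq> V" using s(3) open_contains_ball by blast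
    show "\<exists>Fa \<epsilon>. finite Fa \<and> Fa \<subseteq> ell1 \<and> \<epsilon> > 0 \<and>
     {y. \<forall>a\<in>Fa. \<bar>(\<Sum>\<^sub>\<infinity>i. a i * y i) - (\<Sum>\<^sub>\<infinity>i. a i * x i)\<bar> < \<epsilon>} \<subseteq> s"
      apply (rule exI[of _ "{a}"], rule exI[of _ e])
      using e s by (auto simp: dist_real_def abs_minus_commute)
  qed
qed

lemma weak_star_nbhd:
  assumes "openin weak_star U" "x \<in> U"
  shows "\<exists>Fa \<epsilon>. finite Fa \<and> Fa \<subseteq> ell1 \<and> \<epsilon> > 0 \<and>
     {y\<in>linf. \<forall>a\<in>Fa. \<bar>(\<Sum>\<^sub>\<infinity>i. a i * y i) - (\<Sum>\<^sub>\<infinity>i. a i * x i)\<bar> < \<epsilon>} \<subseteq> U"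
proof -
  obtain V where V: "openin (topology_generated_by {{y. (\<Sum>\<^sub>\<infinity>i. a i * y i) \<in> V} | a V. a \<in> ell1 \<and> open V}) V"
    "U = V \<inter> linf"
    using assms(1) unfolding weak_star_def openin_subtopology by blast
  have "x \<in> V" using V assms(2) by blast
  then obtain Fa \<epsilon> where F: "finite Fa" "Fa \<subseteq> ell1" "\<epsilon> > 0"
     "{y. \<forall>a\<in>Fa. \<bar>(\<Sum>\<^sub>\<infinity>i. a i * y i) - (\<Sum>\<^sub>\<infinity>i. a i * x i)\<bar> < \<epsilon>} \<subseteq> V"
    using gen_nbhd[OF V(1)[unfolded openin_topology_generated_by_iff]] by meson
  have "{y\<in>linf. \<forall>a\<in>Fa. \<bar>(\<Sum>\<^sub>\<infinity>i. a i * y i) - (\<Sum>\<^sub>\<infinity>i. a i * x i)\<bar> < \<epsilon>} \<subseteq> U"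
    using F(4) unfolding V(2) by auto
  then show ?thesis
    apply (intro exI[of _ Fa] exI[of _ \<epsilon>] conjI)
    using F(1-3) by simp_all
qed

lemma lower_density_mono: "A \<subseteq> B \<Longrightarrow> lower_density A \<le> lower_density B"
proof -
  assume AB: "A \<subseteq> B"
  have le: "ereal (real (card {n \<in> A. 1 \<le> n \<and> n \<le> N}) / real N) \<le> ereal (real (card {n \<in> B. 1 \<le> n \<and> n \<le> N}) / real N)" for N :: nat
  proof -
    have "card {n \<in> A. 1 \<le> n \<and> n \<le> N} \<le> card {n \<in> B. 1 \<le> n \<and> n \<le> N}"
      by (rule card_mono) (use AB in auto)
    then have "real (card {n \<in> A. 1 \<le> n \<and> n \<le> N}) / real N \<le> real (card {n \<in> B. 1 \<le> n \<and> n \<le> N}) / real N"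
      by (intro divide_right_mono) simp_all
    then show ?thesis by simp
  qed
  show ?thesis unfolding lower_density_def
    by (rule Liminf_mono) (rule always_eventually, rule allI, rule le)
qed




lemma fhc_criterion:
  fixes T :: "('i \<Rightarrow> real) \<Rightarrow> ('i \<Rightarrow> real)" and y :: "'i \<Rightarrow> real"
  assumes y: "y \<in> linf" and orb: "\<And>n. (T ^^ n) y \<in> linf"
    and main: "\<And>z. z \<in> linf \<Longrightarrow> \<exists>M\<ge>0. \<forall>F \<eta>. finite F \<longrightarrow> \<eta> > 0 \<longrightarrow>
        (\<exists>A. lower_density A > 0 \<and> (\<forall>n\<in>A. \<forall>i. \<bar>(T^^n) y i - z i\<bar> \<le> (if i \<in> F then \<eta> else M)))"
  shows "freq_hypercyclic weak_star T"
proof -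
  have "y \<in> topspace weak_star" unfolding weak_star_topspace by (rule y)
  moreover have "lower_density {n. (T^^n) y \<in> U} > 0" if U: "openin weak_star U" "U \<noteq> {}" for U
  proof -
    obtain x where x: "x \<in> U" using U(2) by blast
    have xl: "x \<in> linf" using openin_subset[OF U(1)] x weak_star_topspace by blast
    obtain Fa \<epsilon> where Fa: "finite Fa" "Fa \<subseteq> ell1" "\<epsilon> > 0"
      "{y\<in>linf. \<forall>a\<in>Fa. \<bar>(\<Sum>\<^sub>\<infinity>i. a i * y i) - (\<Sum>\<^sub>\<infinity>i. a i * x i)\<bar> < \<epsilon>} \<subseteq> U"
      using weak_star_nbhd[OF U(1) x] by (elim exE conjE) blast
    obtain M where M: "M \<ge> 0" "\<forall>F \<eta>. finite F \<longrightarrow> \<eta> > 0 \<longrightarrow>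
        (\<exists>A. lower_density A > 0 \<and> (\<forall>n\<in>A. \<forall>i. \<bar>(T^^n) y i - x i\<bar> \<le> (if i \<in> F then \<eta> else M)))"
      using main[OF xl] by (elim exE conjE) blast
    define \<delta> where "\<delta> = \<epsilon> / (2 * (M + 1))"
    have \<delta>: "\<delta> > 0" unfolding \<delta>_def using Fa(3) M(1) by simp
    have "\<forall>a\<in>Fa. \<exists>F. finite F \<and> infsum (\<lambda>i. \<bar>a i\<bar>) (- F) \<le> \<delta>"
      using tail_small[OF _ \<delta>] Fa(2) by blast
    then obtain G where G: "\<And>a. a \<in> Fa \<Longrightarrow> finite (G a) \<and> infsum (\<lambda>i. \<bar>a i\<bar>) (- G a) \<le> \<delta>"
      by metis
    define F where "F = \<Union>(G ` Fa)"
    have finF: "finite F" unfolding F_def using G Fa(1) by blast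
    define S where "S = 1 + (\<Sum>a\<in>Fa. (\<Sum>\<^sub>\<infinity>i. \<bar>a i\<bar>))"
    have Sa: "(\<Sum>\<^sub>\<infinity>i. \<bar>a i\<bar>) < S" if "a \<in> Fa" for a
    proof -
      have "(\<Sum>\<^sub>\<infinity>i. \<bar>a i\<bar>) \<le> (\<Sum>a\<in>Fa. (\<Sum>\<^sub>\<infinity>i. \<bar>a i\<bar>))"
        by (rule member_le_sum[OF that _ Fa(1)]) (simp add: infsum_nonneg)
      then show ?thesis unfolding S_def by simp
    qed
    have S1: "S \<ge> 1" unfolding S_def by (simp add: infsum_nonneg sum_nonneg)
    define \<eta> where "\<eta> = \<epsilon> / (2 * S)"
    have \<eta>: "\<eta> > 0" unfolding \<eta>_def using Fa(3) S1 by simp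
    obtain A where A: "lower_density A > 0" "\<forall>n\<in>A. \<forall>i. \<bar>(T^^n) y i - x i\<bar> \<le> (if i \<in> F then \<eta> else M)"
      using M(2)[rule_format, OF finF \<eta>] by (elim exE conjE) (rule that)
    have "A \<subseteq> {n. (T^^n) y \<in> U}"
    proof
      fix n assume n: "n \<in> A"
      have "\<bar>(\<Sum>\<^sub>\<infinity>i. a i * (T^^n) y i) - (\<Sum>\<^sub>\<infinity>i. a i * x i)\<bar> < \<epsilon>" if a: "a \<in> Fa" for a
      proof -
        have ae: "a \<in> ell1" using a Fa(2) by blast
        have "\<bar>(\<Sum>\<^sub>\<infinity>i. a i * (T^^n) y i) - (\<Sum>\<^sub>\<infinity>i. a i * x i)\<bar>
            \<le> \<eta> * (\<Sum>\<^sub>\<infinity>i. \<bar>a i\<bar>) + M * infsum (\<lambda>i. \<bar>a i\<bar>) (- F)"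
          by (rule pair_est[OF ae orb xl finF]) (use \<eta> M(1) A(2) n in auto)
        also have "infsum (\<lambda>i. \<bar>a i\<bar>) (- F) \<le> \<delta>"
        proof -
          have "G a \<subseteq> F" unfolding F_def using a by blast
          then have "infsum (\<lambda>i. \<bar>a i\<bar>) (- F) \<le> infsum (\<lambda>i. \<bar>a i\<bar>) (- G a)"
            by (rule tail_mono[OF ae])
          then show ?thesis using G[OF a] by linarith
        qed
        then have "M * infsum (\<lambda>i. \<bar>a i\<bar>) (- F) \<le> M * \<delta>" by (rule mult_left_mono) (rule M(1))
        also have "\<eta> * (\<Sum>\<^sub>\<infinity>i. \<bar>a i\<bar>) < \<eta> * S" using Sa[OF a] \<eta> by simp
        finally have "\<bar>(\<Sum>\<^sub>\<infinity>i. a i * (T^^n) y i) - (\<Sum>\<^sub>\<infinity>i. a i * x i)\<bar> < \<eta> * S + M * \<delta>" by simp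
        also have "\<eta> * S = \<epsilon> / 2" unfolding \<eta>_def using S1 by simp
        also have "M * \<delta> < \<epsilon> / 2"
        proof -
          have "M * \<delta> = \<epsilon> / 2 * (M / (M + 1))" unfolding \<delta>_def using M(1) by (simp add: field_simps)
          also have "\<dots> < \<epsilon> / 2 * 1" using Fa(3) M(1) by (intro mult_strict_left_mono) simp_all
          finally show ?thesis by simp
        qed
        finally show ?thesis by simp
      qed
      then show "n \<in> {n. (T^^n) y \<in> U}" using Fa(4) orb[of n] by blast
    qed
    then have "lower_density A \<le> lower_density {n. (T^^n) y \<in> U}" by (rule lower_density_mono)
    then show ?thesis using A(1) by simp
  qed
  ultimately show ?thesis unfolding freq_hypercyclic_def by blast
qed




lemma wshift_linf:
  assumes C: "\<And>i. \<bar>w (i + 1)\<bar> \<le> C" and y: "y \<in> linf"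
  shows "wshift w y \<in> linf"
proof -
  obtain B where B: "\<And>i. \<bar>y i\<bar> \<le> B" using y linf_iff by blast
  have "\<bar>wshift w y i\<bar> \<le> C * B" for i
  proof -
    have "\<bar>wshift w y i\<bar> = \<bar>w (i+1)\<bar> * \<bar>y (i+1)\<bar>" unfolding wshift_def by (simp add: abs_mult)
    also have "\<dots> \<le> C * B" using C[of i] B[of "i+1"] by (intro mult_mono) auto
    finally show ?thesis .
  qed
  then show ?thesis using linf_iff by blast
qed

lemma wshift_funpow_linf:
  assumes C: "\<And>i. \<bar>w (i + 1)\<bar> \<le> C" and y: "y \<in> linf"
  shows "(wshift w ^^ n) y \<in> linf"
proof (induction n)
  case 0 then show ?case using y by simp
next
  case (Suc n) then show ?case using wshift_linf[of w C, OF C] by simp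
qed

lemma rat_approx: "(e::real) > 0 \<Longrightarrow> \<exists>r::rat. \<bar>of_rat r - x\<bar> < e"
proof -
  assume e: "e > 0"
  then have "x < x + e" by simp
  from Rats_dense_in_real[OF this] obtain r where r: "r \<in> \<rat>" "x < r" "r < x + e" by blast
  from r(1) obtain q where "r = of_rat q" by (cases rule: Rats_cases) auto
  then show ?thesis using r by (intro exI[of _ q]) simp
qed




locale intcase =
  fixes w :: "int \<Rightarrow> real"
  assumes wpos: "\<And>n. w n > 0" and wbdd: "bdd_above (range w)"
    and lim1: "filterlim (\<lambda>n::nat. \<Prod>k=1..n. w (int k)) at_top sequentially"
    and lim2: "(\<lambda>n::nat. \<Prod>k=1..n. w (- int k)) \<longlonglongrightarrow> 0"
begin

definition Wp :: "nat \<Rightarrow> real" where "Wp n = (\<Prod>k=1..n. w (int k))"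
definition Wn :: "nat \<Rightarrow> real" where "Wn n = (\<Prod>k<n. w (- int k))"
definition W :: "int \<Rightarrow> real" where "W j = (if j \<ge> 0 then Wp (nat j) else 1 / Wn (nat (-j)))"

lemma Wp_Suc: "Wp (Suc n) = w (int (Suc n)) * Wp n"
  unfolding Wp_def by (simp add: prod.nat_ivl_Suc')

lemma Wn_Suc: "Wn (Suc n) = w (- int n) * Wn n"
  unfolding Wn_def by (simp add: mult.commute)

lemma Wp_pos: "Wp n > 0" unfolding Wp_def by (rule prod_pos) (simp add: wpos)
lemma Wn_pos: "Wn n > 0" unfolding Wn_def by (rule prod_pos) (simp add: wpos)

lemma W_pos: "W j > 0" unfolding W_def using Wp_pos Wn_pos by simp

lemma W_step: "W (j + 1) = w (j + 1) * W j"
proof (cases "j \<ge> 0")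
  case True
  then have "nat (j + 1) = Suc (nat j)" by simp
  then show ?thesis using True unfolding W_def by (simp add: Wp_Suc add.commute)
next
  case False
  show ?thesis
  proof (cases "j = -1")
    case True
    then show ?thesis unfolding W_def using wpos[of 0]
      by (simp add: Wp_def Wn_def)
  next
    case False2: False
    then have j1: "j + 1 < 0" using False by simp
    have "nat (- j) = Suc (nat (- (j + 1)))" using j1 by simp
    then have "Wn (nat (-j)) = w (j + 1) * Wn (nat (- (j+1)))"
      using j1 by (simp add: Wn_Suc add.commute)
    then show ?thesis unfolding W_def using j1 False wpos[of "j+1"] Wn_pos[of "nat (- (j+1))"]
      by (simp add: field_simps)
  qed
qed

lemma Wn_Suc_eq: "Wn (Suc n) = w 0 * (\<Prod>k=1..n. w (- int k))"
proof (induction n)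
  case 0 then show ?case by (simp add: Wn_def)
next
  case (Suc n)
  have "Wn (Suc (Suc n)) = w (- int (Suc n)) * Wn (Suc n)" by (rule Wn_Suc)
  also have "\<dots> = w 0 * (w (- int (Suc n)) * (\<Prod>k=1..n. w (- int k)))" using Suc by simp
  also have "w (- int (Suc n)) * (\<Prod>k=1..n. w (- int k)) = (\<Prod>k=1..Suc n. w (- int k))"
    by (simp add: prod.nat_ivl_Suc')
  finally show ?case .
qed

lemma W_big: "\<exists>R::nat. \<forall>s. int R \<le> \<bar>s\<bar> \<longrightarrow> V \<le> W s"
proof -
  have "eventually (\<lambda>n. V \<le> Wp n) sequentially"
    using lim1 unfolding Wp_def filterlim_at_top by blast
  then obtain R1 where R1: "\<And>n. n \<ge> R1 \<Longrightarrow> V \<le> Wp n" unfolding eventually_sequentially by blast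
  have t0: "(\<lambda>n. Wn (Suc n)) \<longlonglongrightarrow> 0"
    unfolding Wn_Suc_eq using tendsto_mult[OF tendsto_const[of "w 0"] lim2] by simp
  have "filterlim (\<lambda>n. inverse (Wn (Suc n))) at_top sequentially"
    by (rule filterlim_inverse_at_top[OF t0]) (simp add: Wn_pos)
  then have "eventually (\<lambda>n. V \<le> inverse (Wn (Suc n))) sequentially"
    unfolding filterlim_at_top by blast
  then obtain R2 where R2: "\<And>n. n \<ge> R2 \<Longrightarrow> V \<le> inverse (Wn (Suc n))" unfolding eventually_sequentially by blast
  show ?thesis
  proof (intro exI[of _ "max R1 (Suc R2)"] allI impI)
    fix s :: int assume s: "int (max R1 (Suc R2)) \<le> \<bar>s\<bar>"
    show "V \<le> W s"
    proof (cases "s \<ge> 0")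
      case True
      then have "nat s \<ge> R1" using s by linarith
      then show ?thesis using R1 True unfolding W_def by simp
    next
      case False
      then have "nat (-s) \<ge> Suc R2" using s by linarith
      then obtain m where m: "nat (-s) = Suc m" "m \<ge> R2" by (metis Suc_le_D Suc_le_mono)
      then show ?thesis using R2[OF m(2)] False unfolding W_def by (simp add: divide_inverse)
    qed
  qed
qed

lemma funpow_W: "(wshift w ^^ n) y i = W (i + int n) / W i * y (i + int n)"
proof (induction n arbitrary: i)
  case 0 then show ?case using W_pos[of i] by simp
next
  case (Suc n)
  have "(wshift w ^^ Suc n) y i = w (i+1) * (wshift w ^^ n) y (i+1)" by (simp add: wshift_def)
  also have "\<dots> = w (i+1) * (W (i + 1 + int n) / W (i+1) * y (i + 1 + int n))" using Suc by simp
  also have "W (i+1) = w (i+1) * W i" by (rule W_step)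
  also have "i + 1 + int n = i + int (Suc n)" by simp
  finally show ?case using wpos[of "i+1"] W_pos[of i] by (simp add: field_simps)
qed

lemma w_bound: "\<bar>w (i + 1)\<bar> \<le> (SUP x. w x)"
  using wpos[of "i+1"] cSUP_upper[OF UNIV_I wbdd] by simp

end



definition ipat :: "nat \<Rightarrow> nat \<times> rat list" where "ipat k = from_nat k"
definition iL :: "nat \<Rightarrow> nat" where "iL k = fst (ipat k)"
definition ipv :: "nat \<Rightarrow> int \<Rightarrow> real" where
  "ipv k t = (if \<bar>t\<bar> < int (iL k) then of_rat (snd (ipat k) ! nat (t + int (iL k))) else 0)"

context intcase
begin

definition Vb :: "nat \<Rightarrow> real" where
  "Vb k = (\<Sum>t\<in>{- int (iL k)<..<int (iL k)}. \<bar>ipv k t\<bar> * W t)"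

lemma Vb_ge: "\<bar>ipv k t\<bar> * W t \<le> Vb k"
proof (cases "\<bar>t\<bar> < int (iL k)")
  case True
  then have "t \<in> {- int (iL k)<..<int (iL k)}" by auto
  then show ?thesis unfolding Vb_def
    by (rule member_le_sum[where f="\<lambda>t. \<bar>ipv k t\<bar> * W t"]) (auto intro!: mult_nonneg_nonneg less_imp_le[OF W_pos])
next
  case False
  then have "ipv k t = 0" unfolding ipv_def by simp
  moreover have "Vb k \<ge> 0" unfolding Vb_def by (intro sum_nonneg mult_nonneg_nonneg) (auto intro: less_imp_le[OF W_pos])
  ultimately show ?thesis by simp
qed

lemma N_exists: "\<exists>N::nat\<Rightarrow>nat. \<forall>k. 1 \<le> N k \<and> iL k \<le> N k \<and>
   (\<forall>t d. int (N k) \<le> \<bar>d\<bar> \<longrightarrow> \<bar>ipv k t\<bar> * W t \<le> W (t + d))"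
proof -
  have "\<exists>n::nat. 1 \<le> n \<and> iL k \<le> n \<and> (\<forall>t d. int n \<le> \<bar>d\<bar> \<longrightarrow> \<bar>ipv k t\<bar> * W t \<le> W (t + d))" for k
  proof -
    obtain R where R: "\<And>s. int R \<le> \<bar>s\<bar> \<Longrightarrow> Vb k \<le> W s" using W_big[of "Vb k"] by blast
    show ?thesis
    proof (intro exI[of _ "1 + iL k + R"] conjI allI impI)
      fix t d :: int assume d: "int (1 + iL k + R) \<le> \<bar>d\<bar>"
      show "\<bar>ipv k t\<bar> * W t \<le> W (t + d)"
      proof (cases "\<bar>t\<bar> < int (iL k)")
        case True
        then have "int R \<le> \<bar>t + d\<bar>" using d by linarith
        then show ?thesis using R Vb_ge[of k t] by fastforce
      next
        case False
        then show ?thesis unfolding ipv_def using W_pos[of "t+d"] by simp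
      qed
    qed simp_all
  qed
  then show ?thesis by metis
qed

end

locale intcase2 = intcase w for w +
  fixes N :: "nat \<Rightarrow> nat" and A :: "nat \<Rightarrow> nat set"
  assumes N1: "\<And>k. 1 \<le> N k" and NL: "\<And>k. iL k \<le> N k"
    and Ngrow: "\<And>k t d. int (N k) \<le> \<bar>d\<bar> \<Longrightarrow> \<bar>ipv k t\<bar> * W t \<le> W (t + d)"
    and Adens: "\<And>k. lower_density (A k) > 0"
    and Age: "\<And>k n. n \<in> A k \<Longrightarrow> N k \<le> n"
    and Asep: "\<And>k l n m. n \<in> A k \<Longrightarrow> m \<in> A l \<Longrightarrow> (k,n) \<noteq> (l,m) \<Longrightarrow> n + N k + N l \<le> m \<or> m + N k + N l \<le> n"
begin

definition blk :: "int \<Rightarrow> (nat \<times> nat) set" where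
  "blk j = {(k,n). n \<in> A k \<and> \<bar>j - int n\<bar> < int (iL k)}"

definition yv :: "int \<Rightarrow> real" where
  "yv j = (if blk j = {} then 0 else
     (case SOME p. p \<in> blk j of (k,n) \<Rightarrow> ipv k (j - int n) * W (j - int n) / W j))"

lemma blk_unique:
  assumes "(k,n) \<in> blk j" "(l,m) \<in> blk j" shows "(k,n) = (l,m)"
proof (rule ccontr)
  assume ne: "(k,n) \<noteq> (l,m)"
  have kn: "n \<in> A k" "\<bar>j - int n\<bar> < int (iL k)" and lm: "m \<in> A l" "\<bar>j - int m\<bar> < int (iL l)"
    using assms unfolding blk_def by auto
  have "n + N k + N l \<le> m \<or> m + N k + N l \<le> n" by (rule Asep[OF kn(1) lm(1) ne])
  then show False using kn(2) lm(2) NL[of k] NL[of l] by linarith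
qed

lemma yv_blk:
  assumes "(k,n) \<in> blk j"
  shows "yv j = ipv k (j - int n) * W (j - int n) / W j"
proof -
  have ne: "blk j \<noteq> {}" using assms by blast
  have "(SOME p. p \<in> blk j) \<in> blk j" using assms by (rule someI)
  then have "(SOME p. p \<in> blk j) = (k,n)" using blk_unique assms by (metis surj_pair)
  then show ?thesis unfolding yv_def using ne by simp
qed

lemma yv_nblk: "blk j = {} \<Longrightarrow> yv j = 0" unfolding yv_def by simp

lemma yv_bound: "\<bar>yv j\<bar> \<le> 1"
proof (cases "blk j = {}")
  case True then show ?thesis using yv_nblk by simp
next
  case False
  then obtain k n where kn: "(k,n) \<in> blk j" by auto
  then have n: "n \<in> A k" unfolding blk_def by simp
  have "\<bar>ipv k (j - int n)\<bar> * W (j - int n) \<le> W (j - int n + int n)"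
    by (rule Ngrow) (use Age[OF n] in simp)
  then have "\<bar>ipv k (j - int n)\<bar> * W (j - int n) \<le> W j" by simp
  then show ?thesis unfolding yv_blk[OF kn] using W_pos[of j] W_pos[of "j - int n"]
    by (simp add: abs_mult abs_divide divide_le_eq)
qed

lemma yv_linf: "yv \<in> linf" using yv_bound linf_iff by blast

lemma orbit_in:
  assumes n: "n \<in> A k" and i: "\<bar>i\<bar> < int (iL k)"
  shows "(wshift w ^^ n) yv i = ipv k i"
proof -
  have "(k,n) \<in> blk (i + int n)" unfolding blk_def using n i by simp
  from yv_blk[OF this] have "yv (i + int n) = ipv k i * W i / W (i + int n)" by simp
  then show ?thesis unfolding funpow_W using W_pos[of i] W_pos[of "i + int n"] by simp
qed

lemma orbit_out:
  assumes n: "n \<in> A k" and i: "int (iL k) \<le> \<bar>i\<bar>"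
  shows "\<bar>(wshift w ^^ n) yv i\<bar> \<le> 1"
proof (cases "blk (i + int n) = {}")
  case True
  then show ?thesis unfolding funpow_W using yv_nblk by simp
next
  case False
  then obtain l m where lm: "(l,m) \<in> blk (i + int n)" by auto
  then have m: "m \<in> A l" unfolding blk_def by simp
  have ne: "(k,n) \<noteq> (l,m)"
  proof
    assume "(k,n) = (l,m)"
    then show False using lm i unfolding blk_def by auto
  qed
  have sep: "n + N k + N l \<le> m \<or> m + N k + N l \<le> n" by (rule Asep[OF n m ne])
  define t where "t = i + int n - int m"
  have "\<bar>ipv l t\<bar> * W t \<le> W (t + (int m - int n))"
    by (rule Ngrow) (use sep in linarith)
  then have le: "\<bar>ipv l t\<bar> * W t \<le> W i" unfolding t_def by simp
  have "(wshift w ^^ n) yv i = W (i + int n) / W i * (ipv l t * W t / W (i + int n))"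
    unfolding funpow_W yv_blk[OF lm] t_def by simp
  also have "\<dots> = ipv l t * W t / W i" using W_pos[of "i + int n"] by simp
  finally show ?thesis using le W_pos[of i] W_pos[of t] by (simp add: abs_mult abs_divide divide_le_eq)
qed

end



context intcase2
begin

lemma main_cond:
  assumes z: "z \<in> linf"
  shows "\<exists>M\<ge>0. \<forall>F \<eta>. finite F \<longrightarrow> \<eta> > 0 \<longrightarrow>
        (\<exists>A'. lower_density A' > 0 \<and> (\<forall>n\<in>A'. \<forall>i. \<bar>(wshift w ^^ n) yv i - z i\<bar> \<le> (if i \<in> F then \<eta> else M)))"
proof -
  obtain B where B: "\<And>i. \<bar>z i\<bar> \<le> B" using z linf_iff by blast
  have B0: "B \<ge> 0" using B[of 0] by simp
  show ?thesis
  proof (intro exI[of _ "1 + B"] conjI allI impI)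
    show "0 \<le> 1 + B" using B0 by simp
    fix F :: "int set" and \<eta> :: real assume F: "finite F" and \<eta>: "\<eta> > 0"
    define L where "L = nat (\<Sum>i\<in>F. \<bar>i\<bar>) + 1"
    have FL: "\<bar>i\<bar> < int L" if "i \<in> F" for i
    proof -
      have "\<bar>i\<bar> \<le> (\<Sum>i\<in>F. \<bar>i\<bar>)" by (rule member_le_sum[OF that _ F]) simp
      then show ?thesis unfolding L_def by linarith
    qed
    define e where "e = min \<eta> 1"
    have e: "e > 0" unfolding e_def using \<eta> by simp
    have "\<forall>x. \<exists>r::rat. \<bar>of_rat r - x\<bar> < e" using rat_approx[OF e] by blast
    then obtain appr where appr: "\<And>x. \<bar>of_rat (appr x) - x\<bar> < e" by metis
    define qs where "qs = map (\<lambda>m. appr (z (int m - int L))) [0..<2*L]"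
    define k where "k = to_nat (L, qs)"
    have pk: "ipat k = (L, qs)" unfolding ipat_def k_def by simp
    have Lk: "iL k = L" unfolding iL_def pk by simp
    have pv: "ipv k t = of_rat (appr (z t))" if t: "\<bar>t\<bar> < int L" for t
    proof -
      have lt: "nat (t + int L) < 2 * L" using t by linarith
      have "int (nat (t + int L)) - int L = t" using t by linarith
      then have "qs ! nat (t + int L) = appr (z t)" unfolding qs_def using lt by simp
      then show ?thesis unfolding ipv_def Lk pk using t by simp
    qed
    show "\<exists>A'. lower_density A' > 0 \<and> (\<forall>n\<in>A'. \<forall>i. \<bar>(wshift w ^^ n) yv i - z i\<bar> \<le> (if i \<in> F then \<eta> else 1 + B))"
    proof (intro exI[of _ "A k"] conjI ballI allI)
      show "lower_density (A k) > 0" by (rule Adens)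
      fix n i assume n: "n \<in> A k"
      show "\<bar>(wshift w ^^ n) yv i - z i\<bar> \<le> (if i \<in> F then \<eta> else 1 + B)"
      proof (cases "\<bar>i\<bar> < int L")
        case True
        have "(wshift w ^^ n) yv i = of_rat (appr (z i))"
          using orbit_in[OF n, of i] True Lk pv[OF True] by simp
        then have "\<bar>(wshift w ^^ n) yv i - z i\<bar> < e" using appr by simp
        then show ?thesis unfolding e_def using B0 by auto
      next
        case False
        then have "i \<notin> F" using FL by force
        have "\<bar>(wshift w ^^ n) yv i\<bar> \<le> 1" by (rule orbit_out[OF n]) (use False Lk in simp)
        then have "\<bar>(wshift w ^^ n) yv i - z i\<bar> \<le> 1 + B" using B[of i] by linarith
        then show ?thesis using \<open>i \<notin> F\<close> by simp
      qed
    qed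
  qed
qed

lemma fhc2: "freq_hypercyclic (weak_star :: (int \<Rightarrow> real) topology) (wshift w)"
  by (rule fhc_criterion[OF yv_linf wshift_funpow_linf[of w "SUP x. w x", OF w_bound yv_linf] main_cond])

end

context intcase
begin

lemma fhc: "freq_hypercyclic (weak_star :: (int \<Rightarrow> real) topology) (wshift w)"
proof -
  obtain N :: "nat \<Rightarrow> nat" where N: "\<And>k. 1 \<le> N k" "\<And>k. iL k \<le> N k"
    "\<And>k t d. int (N k) \<le> \<bar>d\<bar> \<Longrightarrow> \<bar>ipv k t\<bar> * W t \<le> W (t + d)"
    using N_exists by metis
  obtain A :: "nat \<Rightarrow> nat set" where A: "\<And>k. lower_density (A k) > 0" "\<And>k n. n \<in> A k \<Longrightarrow> N k \<le> n"
    "\<And>k l n m. n \<in> A k \<Longrightarrow> m \<in> A l \<Longrightarrow> (k,n) \<noteq> (l,m) \<Longrightarrow> n + N k + N l \<le> m \<or> m + N k + N l \<le> n"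
    using sep_sets[of N] by metis
  interpret intcase2 w N A
    by unfold_locales (use N A in auto)
  show ?thesis by (rule fhc2)
qed

end



locale natcase =
  fixes w :: "nat \<Rightarrow> real"
  assumes wpos: "\<And>n. n \<ge> 1 \<Longrightarrow> w n > 0" and wbdd: "bdd_above (w ` {1..})"
    and lim1: "filterlim (\<lambda>n. \<Prod>k=1..n. w k) at_top sequentially"
begin

definition W :: "nat \<Rightarrow> real" where "W j = (\<Prod>k=1..j. w k)"

lemma W_step: "W (Suc j) = w (Suc j) * W j"
  unfolding W_def by (simp add: prod.nat_ivl_Suc')

lemma W_pos: "W j > 0" unfolding W_def by (rule prod_pos) (simp add: wpos)

lemma W_big: "\<exists>R::nat. \<forall>s. R \<le> s \<longrightarrow> V \<le> W s"
proof -
  have "eventually (\<lambda>n. V \<le> W n) sequentially"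
    using lim1 unfolding W_def filterlim_at_top by blast
  then show ?thesis unfolding eventually_sequentially by blast
qed

lemma funpow_W: "(wshift w ^^ n) y i = W (i + n) / W i * y (i + n)"
proof (induction n arbitrary: i)
  case 0 then show ?case using W_pos[of i] by simp
next
  case (Suc n)
  have "(wshift w ^^ Suc n) y i = w (Suc i) * (wshift w ^^ n) y (Suc i)" by (simp add: wshift_def)
  also have "\<dots> = w (Suc i) * (W (Suc i + n) / W (Suc i) * y (Suc i + n))" using Suc by simp
  also have "W (Suc i) = w (Suc i) * W i" by (rule W_step)
  also have "Suc i + n = i + Suc n" by simp
  finally show ?case using wpos[of "Suc i"] W_pos[of i] by (simp add: field_simps)
qed

lemma w_bound: "\<bar>w (i + 1)\<bar> \<le> (SUP x\<in>{1..}. w x)"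
  using wpos[of "i+1"] cSUP_upper[OF _ wbdd, of "i+1"] by simp

end

definition npat :: "nat \<Rightarrow> nat \<times> rat list" where "npat k = from_nat k"
definition nL :: "nat \<Rightarrow> nat" where "nL k = fst (npat k)"
definition npv :: "nat \<Rightarrow> nat \<Rightarrow> real" where
  "npv k t = (if t < nL k then of_rat (snd (npat k) ! t) else 0)"

context natcase
begin

definition Vb :: "nat \<Rightarrow> real" where
  "Vb k = (\<Sum>t<nL k. \<bar>npv k t\<bar> * W t)"

lemma Vb_ge: "\<bar>npv k t\<bar> * W t \<le> Vb k"
proof (cases "t < nL k")
  case True
  then have "t \<in> {..<nL k}" by auto
  then show ?thesis unfolding Vb_def
    by (rule member_le_sum[where f="\<lambda>t. \<bar>npv k t\<bar> * W t"]) (auto intro!: mult_nonneg_nonneg less_imp_le[OF W_pos])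
next
  case False
  then have "npv k t = 0" unfolding npv_def by simp
  moreover have "Vb k \<ge> 0" unfolding Vb_def by (intro sum_nonneg mult_nonneg_nonneg) (auto intro: less_imp_le[OF W_pos])
  ultimately show ?thesis by simp
qed

lemma N_exists: "\<exists>N::nat\<Rightarrow>nat. \<forall>k. 1 \<le> N k \<and> nL k \<le> N k \<and>
   (\<forall>t d. N k \<le> d \<longrightarrow> \<bar>npv k t\<bar> * W t \<le> W (t + d))"
proof -
  have "\<exists>n::nat. 1 \<le> n \<and> nL k \<le> n \<and> (\<forall>t d. n \<le> d \<longrightarrow> \<bar>npv k t\<bar> * W t \<le> W (t + d))" for k
  proof -
    obtain R where R: "\<And>s. R \<le> s \<Longrightarrow> Vb k \<le> W s" using W_big[of "Vb k"] by blast
    show ?thesis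
    proof (intro exI[of _ "1 + nL k + R"] conjI allI impI)
      fix t d :: nat assume d: "1 + nL k + R \<le> d"
      then have "R \<le> t + d" by linarith
      then show "\<bar>npv k t\<bar> * W t \<le> W (t + d)" using R Vb_ge[of k t] by fastforce
    qed simp_all
  qed
  then show ?thesis by metis
qed

end

locale natcase2 = natcase w for w +
  fixes N :: "nat \<Rightarrow> nat" and A :: "nat \<Rightarrow> nat set"
  assumes N1: "\<And>k. 1 \<le> N k" and NL: "\<And>k. nL k \<le> N k"
    and Ngrow: "\<And>k t d. N k \<le> d \<Longrightarrow> \<bar>npv k t\<bar> * W t \<le> W (t + d)"
    and Adens: "\<And>k. lower_density (A k) > 0"
    and Age: "\<And>k n. n \<in> A k \<Longrightarrow> N k \<le> n"
    and Asep: "\<And>k l n m. n \<in> A k \<Longrightarrow> m \<in> A l \<Longrightarrow> (k,n) \<noteq> (l,m) \<Longrightarrow> n + N k + N l \<le> m \<or> m + N k + N l \<le> n"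
begin

definition blk :: "nat \<Rightarrow> (nat \<times> nat) set" where
  "blk j = {(k,n). n \<in> A k \<and> n \<le> j \<and> j < n + nL k}"

definition yv :: "nat \<Rightarrow> real" where
  "yv j = (if blk j = {} then 0 else
     (case SOME p. p \<in> blk j of (k,n) \<Rightarrow> npv k (j - n) * W (j - n) / W j))"

lemma blk_unique:
  assumes "(k,n) \<in> blk j" "(l,m) \<in> blk j" shows "(k,n) = (l,m)"
proof (rule ccontr)
  assume ne: "(k,n) \<noteq> (l,m)"
  have kn: "n \<in> A k" "n \<le> j" "j < n + nL k" and lm: "m \<in> A l" "m \<le> j" "j < m + nL l"
    using assms unfolding blk_def by auto
  have "n + N k + N l \<le> m \<or> m + N k + N l \<le> n" by (rule Asep[OF kn(1) lm(1) ne])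
  then show False using kn(2,3) lm(2,3) NL[of k] NL[of l] by linarith
qed

lemma yv_blk:
  assumes "(k,n) \<in> blk j"
  shows "yv j = npv k (j - n) * W (j - n) / W j"
proof -
  have ne: "blk j \<noteq> {}" using assms by blast
  have "(SOME p. p \<in> blk j) \<in> blk j" using assms by (rule someI)
  then have "(SOME p. p \<in> blk j) = (k,n)" using blk_unique assms by (metis surj_pair)
  then show ?thesis unfolding yv_def using ne by simp
qed

lemma yv_nblk: "blk j = {} \<Longrightarrow> yv j = 0" unfolding yv_def by simp

lemma yv_bound: "\<bar>yv j\<bar> \<le> 1"
proof (cases "blk j = {}")
  case True then show ?thesis using yv_nblk by simp
next
  case False
  then obtain k n where kn: "(k,n) \<in> blk j" by auto
  then have n: "n \<in> A k" "n \<le> j" unfolding blk_def by auto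
  have "\<bar>npv k (j - n)\<bar> * W (j - n) \<le> W (j - n + n)"
    by (rule Ngrow) (use Age[OF n(1)] in simp)
  then have "\<bar>npv k (j - n)\<bar> * W (j - n) \<le> W j" using n(2) by simp
  then show ?thesis unfolding yv_blk[OF kn] using W_pos[of j] W_pos[of "j - n"]
    by (simp add: abs_mult abs_divide divide_le_eq)
qed

lemma yv_linf: "yv \<in> linf" using yv_bound linf_iff by blast

lemma orbit_in:
  assumes n: "n \<in> A k" and i: "i < nL k"
  shows "(wshift w ^^ n) yv i = npv k i"
proof -
  have "(k,n) \<in> blk (i + n)" unfolding blk_def using n i by simp
  from yv_blk[OF this] have "yv (i + n) = npv k i * W i / W (i + n)" by simp
  then show ?thesis unfolding funpow_W using W_pos[of i] W_pos[of "i + n"] by simp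
qed

lemma orbit_out:
  assumes n: "n \<in> A k" and i: "nL k \<le> i"
  shows "\<bar>(wshift w ^^ n) yv i\<bar> \<le> 1"
proof (cases "blk (i + n) = {}")
  case True
  then show ?thesis unfolding funpow_W using yv_nblk by simp
next
  case False
  then obtain l m where lm: "(l,m) \<in> blk (i + n)" by auto
  then have m: "m \<in> A l" "m \<le> i + n" "i + n < m + nL l" unfolding blk_def by auto
  have ne: "(k,n) \<noteq> (l,m)"
  proof
    assume "(k,n) = (l,m)"
    then show False using m i by auto
  qed
  have sep: "n + N k + N l \<le> m \<or> m + N k + N l \<le> n" by (rule Asep[OF n m(1) ne])
  then have mn: "n + N l \<le> m" using m(2,3) NL[of l] by linarith
  define t where "t = i + n - m"
  have "\<bar>npv l t\<bar> * W t \<le> W (t + (m - n))"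
    by (rule Ngrow) (use mn in linarith)
  moreover have "t + (m - n) = i" unfolding t_def using mn m(2) by linarith
  ultimately have le: "\<bar>npv l t\<bar> * W t \<le> W i" by simp
  have "(wshift w ^^ n) yv i = W (i + n) / W i * (npv l t * W t / W (i + n))"
    unfolding funpow_W yv_blk[OF lm] t_def by simp
  also have "\<dots> = npv l t * W t / W i" using W_pos[of "i + n"] by simp
  finally show ?thesis using le W_pos[of i] W_pos[of t] by (simp add: abs_mult abs_divide divide_le_eq)
qed

lemma main_cond:
  assumes z: "z \<in> linf"
  shows "\<exists>M\<ge>0. \<forall>F \<eta>. finite F \<longrightarrow> \<eta> > 0 \<longrightarrow>
        (\<exists>A'. lower_density A' > 0 \<and> (\<forall>n\<in>A'. \<forall>i. \<bar>(wshift w ^^ n) yv i - z i\<bar> \<le> (if i \<in> F then \<eta> else M)))"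
proof -
  obtain B where B: "\<And>i. \<bar>z i\<bar> \<le> B" using z linf_iff by blast
  have B0: "B \<ge> 0" using B[of 0] by simp
  show ?thesis
  proof (intro exI[of _ "1 + B"] conjI allI impI)
    show "0 \<le> 1 + B" using B0 by simp
    fix F :: "nat set" and \<eta> :: real assume F: "finite F" and \<eta>: "\<eta> > 0"
    define L where "L = (\<Sum>i\<in>F. i) + 1"
    have FL: "i < L" if "i \<in> F" for i
    proof -
      have "i \<le> (\<Sum>i\<in>F. i)" by (rule member_le_sum[OF that _ F]) simp
      then show ?thesis unfolding L_def by linarith
    qed
    define e where "e = min \<eta> 1"
    have e: "e > 0" unfolding e_def using \<eta> by simp
    have "\<forall>x. \<exists>r::rat. \<bar>of_rat r - x\<bar> < e" using rat_approx[OF e] by blast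
    then obtain appr where appr: "\<And>x. \<bar>of_rat (appr x) - x\<bar> < e" by metis
    define qs where "qs = map (\<lambda>m. appr (z m)) [0..<L]"
    define k where "k = to_nat (L, qs)"
    have pk: "npat k = (L, qs)" unfolding npat_def k_def by simp
    have Lk: "nL k = L" unfolding nL_def pk by simp
    have pv: "npv k t = of_rat (appr (z t))" if t: "t < L" for t
    proof -
      have "qs ! t = appr (z t)" unfolding qs_def using t by simp
      then show ?thesis unfolding npv_def Lk pk using t by simp
    qed
    show "\<exists>A'. lower_density A' > 0 \<and> (\<forall>n\<in>A'. \<forall>i. \<bar>(wshift w ^^ n) yv i - z i\<bar> \<le> (if i \<in> F then \<eta> else 1 + B))"
    proof (intro exI[of _ "A k"] conjI ballI allI)
      show "lower_density (A k) > 0" by (rule Adens)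
      fix n i assume n: "n \<in> A k"
      show "\<bar>(wshift w ^^ n) yv i - z i\<bar> \<le> (if i \<in> F then \<eta> else 1 + B)"
      proof (cases "i < L")
        case True
        have "(wshift w ^^ n) yv i = of_rat (appr (z i))"
          using orbit_in[OF n, of i] True Lk pv[OF True] by simp
        then have "\<bar>(wshift w ^^ n) yv i - z i\<bar> < e" using appr by simp
        then show ?thesis unfolding e_def using B0 by auto
      next
        case False
        then have "i \<notin> F" using FL by force
        have "\<bar>(wshift w ^^ n) yv i\<bar> \<le> 1" by (rule orbit_out[OF n]) (use False Lk in simp)
        then have "\<bar>(wshift w ^^ n) yv i - z i\<bar> \<le> 1 + B" using B[of i] by linarith
        then show ?thesis using \<open>i \<notin> F\<close> by simp
      qed
    qed
  qed
qed

lemma fhc2: "freq_hypercyclic (weak_star :: (nat \<Rightarrow> real) topology) (wshift w)"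
  by (rule fhc_criterion[OF yv_linf wshift_funpow_linf[of w "SUP x\<in>{1..}. w x", OF w_bound yv_linf] main_cond])

end

context natcase
begin

lemma fhc: "freq_hypercyclic (weak_star :: (nat \<Rightarrow> real) topology) (wshift w)"
proof -
  obtain N :: "nat \<Rightarrow> nat" where N: "\<And>k. 1 \<le> N k" "\<And>k. nL k \<le> N k"
    "\<And>k t d. N k \<le> d \<Longrightarrow> \<bar>npv k t\<bar> * W t \<le> W (t + d)"
    using N_exists by metis
  obtain A :: "nat \<Rightarrow> nat set" where A: "\<And>k. lower_density (A k) > 0" "\<And>k n. n \<in> A k \<Longrightarrow> N k \<le> n"
    "\<And>k l n m. n \<in> A k \<Longrightarrow> m \<in> A l \<Longrightarrow> (k,n) \<noteq> (l,m) \<Longrightarrow> n + N k + N l \<le> m \<or> m + N k + N l \<le> n"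
    using sep_sets[of N] by metis
  interpret natcase2 w N A
    by unfold_locales (use N A in auto)
  show ?thesis by (rule fhc2)
qed

end


theorem proposition4p9:
  shows "(\<forall>w :: nat \<Rightarrow> real.
            (\<forall>n\<ge>1. w n > 0) \<and> bdd_above (w ` {1..}) \<and>
            filterlim (\<lambda>n. \<Prod>k=1..n. w k) at_top sequentially
            \<longrightarrow> freq_hypercyclic (weak_star :: (nat \<Rightarrow> real) topology) (wshift w))
       \<and> (\<forall>w :: int \<Rightarrow> real.
            (\<forall>n. w n > 0) \<and> bdd_above (range w) \<and>
            filterlim (\<lambda>n::nat. \<Prod>k=1..n. w (int k)) at_top sequentially \<and>
            (\<lambda>n::nat. \<Prod>k=1..n. w (- int k)) \<longlonglongrightarrow> 0
            \<longrightarrow> freq_hypercyclic (weak_star :: (int \<Rightarrow> real) topology) (wshift w))"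
proof (intro conjI allI impI)
  fix w :: "nat \<Rightarrow> real"
  assume h: "(\<forall>n\<ge>1. w n > 0) \<and> bdd_above (w ` {1..}) \<and>
            filterlim (\<lambda>n. \<Prod>k=1..n. w k) at_top sequentially"
  have "natcase w" by (rule natcase.intro) (use h in auto)
  then show "freq_hypercyclic (weak_star :: (nat \<Rightarrow> real) topology) (wshift w)" by (rule natcase.fhc)
next
  fix w :: "int \<Rightarrow> real"
  assume h: "(\<forall>n. w n > 0) \<and> bdd_above (range w) \<and>
            filterlim (\<lambda>n::nat. \<Prod>k=1..n. w (int k)) at_top sequentially \<and>
            (\<lambda>n::nat. \<Prod>k=1..n. w (- int k)) \<longlonglongrightarrow> 0"
  have "intcase w" by (rule intcase.intro) (use h in auto)
  then show "freq_hypercyclic (weak_star :: (int \<Rightarrow> real) topology) (wshift w)" by (rule intcase.fhc)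
qed

end
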